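(* Let $f\ge 1$ and $k\ge 2$ be integers and let there be $n=kf+1$ validators, each maintaining a local DAG as described in the context (Tusk setting). If an honest validator $p_i$ commits a leader vertex $v\in DAG_i[\mathit{round}(w,1)]$ in a wave $w$ (i.e. at least $f+1$ vertices of $DAG_i[\mathit{round}(w,2)]$ have an edge to $v$), then for every honest validator $p_j$, every wave $w'>w$ and every leader vertex $v'$ of wave $w'$ committed by $p_j$ (in particular $v'\in DAG_j[\mathit{round}(w',1)]$; the leader of wave $w'$ is the $\mathit{round}(w',1)$ vertex of an arbitrary validator, selected by a shared coin), there is a path from $v'$ to $v$ in $DAG_j$.
   Context: Setting: $n=kf+1$ validators $p_1,\dots,p_n$, at most $f$ Byzantine, the rest honest. All local DAGs are subsets of one common set of vertices. Each vertex has a round number $r\ge1$ and a source validator; for each validator and round there is at most one vertex (no equivocation), so all local DAGs containing a given validator's vertex for a given round contain the identical vertex with identical edges. Every vertex of round $r\ge2$ has edges to $(k-1)f+1$ vertices of round $r-1$ with distinct sources. Each validator $p_i$ has a local DAG $DAG_i$, closed under edges (if $u\in DAG_i$ then all vertices $u$ has edges to are in $DAG_i$); $DAG_i[r]$ is its set of round-$r$ vertices; a path from $u$ to $v$ is a sequence of contiguous edges from $u$ to $v$. Waves consist of 3 rounds and consecutive waves are pipelined so that round 3 of wave $w$ is round 1 of wave $w+1$: $\mathit{round}(w,j)=2(w-1)+j$ for $j=1,2,3$. A validator $p_i$ commits the leader $v$ of wave $w$ (direct commit rule) if at least $f+1$ vertices of $DAG_i[\mathit{round}(w,2)]$ have an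 edge to $v$. *)

theory Defs
  imports Main
begin

text \<open>Vertices have an abstract type 'v; rnd u is the round of u, src u its source
validator, and E u x means that u has an edge to x. Since there is no equivocation,
edges are a global relation on the common vertex set.\<close>

definition wround :: "nat \<Rightarrow> nat \<Rightarrow> nat" where
  "wround w j = 2 * (w - 1) + j"

definition dag_round :: "('v \<Rightarrow> nat) \<Rightarrow> 'v set \<Rightarrow> nat \<Rightarrow> 'v set" where
  "dag_round rnd D r = {u \<in> D. rnd u = r}"

definition commits ::
  "('v \<Rightarrow> 'v \<Rightarrow> bool) \<Rightarrow> ('v \<Rightarrow> nat) \<Rightarrow> nat \<Rightarrow> 'v set \<Rightarrow> nat \<Rightarrow> 'v \<Rightarrow> bool" where
  "commits E rnd f D w v \<longleftrightarrow>
     v \<in> dag_round rnd D (wround w 1) \<and>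
     f + 1 \<le> card {u \<in> dag_round rnd D (wround w 2). E u v}"

definition dag_path :: "('v \<Rightarrow> 'v \<Rightarrow> bool) \<Rightarrow> 'v set \<Rightarrow> 'v \<Rightarrow> 'v \<Rightarrow> bool" where
  "dag_path E D u v \<longleftrightarrow> (\<lambda>a b. E a b \<and> a \<in> D \<and> b \<in> D)\<^sup>+\<^sup>+ u v"

end

theory Submission
  imports Defs
begin

theorem lemma3:
  fixes f k n :: nat
    and Vs :: "'v set"
    and rnd :: "'v \<Rightarrow> nat" and src :: "'v \<Rightarrow> nat"
    and E :: "'v \<Rightarrow> 'v \<Rightarrow> bool"
    and DAG :: "nat \<Rightarrow> 'v set"
    and Honest :: "nat set"
  assumes f_ge: "f \<ge> 1" and k_ge: "k \<ge> 2" and n_def: "n = k * f + 1"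
    and honest_sub: "Honest \<subseteq> {1..n}"
    and byz_bound: "card ({1..n} - Honest) \<le> f"
    and rnd_pos: "\<forall>u\<in>Vs. rnd u \<ge> 1"
    and src_range: "\<forall>u\<in>Vs. src u \<in> {1..n}"
    and no_equiv: "\<forall>u\<in>Vs. \<forall>u'\<in>Vs. rnd u = rnd u' \<and> src u = src u' \<longrightarrow> u = u'"
    and edges_in: "\<forall>u x. E u x \<longrightarrow> u \<in> Vs \<and> x \<in> Vs"
    and edges_prev: "\<forall>u x. E u x \<longrightarrow> rnd u = rnd x + 1"
    and edges_card: "\<forall>u\<in>Vs. rnd u \<ge> 2 \<longrightarrow>
                       card {x. E u x} = (k - 1) * f + 1 \<and> inj_on src {x. E u x}"
    and dag_sub: "\<forall>i\<in>{1..n}. DAG i \<subseteq> Vs"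
    and dag_closed: "\<forall>i\<in>{1..n}. \<forall>u x. u \<in> DAG i \<and> E u x \<longrightarrow> x \<in> DAG i"
    and hi: "i \<in> Honest" and hj: "j \<in> Honest"
    and w_pos: "w \<ge> 1"
    and commit_i: "commits E rnd f (DAG i) w v"
    and w'_gt: "w' > w"
    and commit_j: "commits E rnd f (DAG j) w' v'"
  shows "dag_path E (DAG j) v' v"
proof -
  let ?R = "\<lambda>a b. E a b \<and> a \<in> DAG j \<and> b \<in> DAG j"
  have jn: "j \<in> {1..n}" using hj honest_sub by blast
  have in_: "i \<in> {1..n}" using hi honest_sub by blast
  have w2: "wround w 2 = 2*w" "wround w 1 = 2*w - 1" using w_pos by (auto simp: wround_def)
  define S where "S = {s \<in> dag_round rnd (DAG i) (2*w). E s v}"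
  have cS: "f + 1 \<le> card S" using commit_i w2 by (simp add: commits_def S_def)
  have fS: "finite S" using cS card.infinite by fastforce
  have SVs: "S \<subseteq> Vs" using dag_sub in_ by (auto simp: S_def dag_round_def)
  have injS: "inj_on src S"
  proof (rule inj_onI)
    fix x y assume "x \<in> S" "y \<in> S" "src x = src y"
    moreover have "rnd x = rnd y" using \<open>x \<in> S\<close> \<open>y \<in> S\<close> by (simp add: S_def dag_round_def)
    moreover have "x \<in> Vs" "y \<in> Vs" using \<open>x \<in> S\<close> \<open>y \<in> S\<close> SVs by auto
    ultimately show "x = y" using no_equiv by blast
  qed
  have srcS: "src ` S \<subseteq> {1..n}" using src_range SVs by blast
  have base: "?R\<^sup>+\<^sup>+ u v" if u: "u \<in> DAG j" "rnd u = 2*w+1" for u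
  proof -
    have uV: "u \<in> Vs" using u dag_sub jn by blast
    define N where "N = {x. E u x}"
    have cN: "card N = (k-1)*f+1" and injN: "inj_on src N"
    proof -
      have "2 \<le> rnd u" using u w_pos by simp
      then show "card N = (k-1)*f+1" "inj_on src N" using edges_card uV by (auto simp: N_def)
    qed
    have fN: "finite N" using cN card.infinite by fastforce
    have NVs: "N \<subseteq> Vs" using edges_in by (auto simp: N_def)
    have srcN: "src ` N \<subseteq> {1..n}" using src_range NVs by blast
    have "card (src ` N \<union> src ` S) \<le> n"
      using card_mono[OF _ Un_least[OF srcN srcS]] by simp
    moreover have "card (src ` N) + card (src ` S) = card (src ` N \<union> src ` S) + card (src ` N \<inter> src ` S)"
      using card_Un_Int fN fS by blast
    moreover have "card (src ` N) = (k-1)*f+1" using card_image[OF injN] cN by simp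
    moreover have "card (src ` S) \<ge> f+1" using card_image[OF injS] cS by simp
    moreover have "(k-1)*f + f = k*f" proof -
      obtain k' where "k = Suc k'" using k_ge by (cases k) auto
      then show ?thesis by simp
    qed
    ultimately have "card (src ` N \<inter> src ` S) \<noteq> 0" using n_def by linarith
    then have "src ` N \<inter> src ` S \<noteq> {}" by (metis card.empty)
    then obtain y where "y \<in> src ` N" "y \<in> src ` S" by blast
    then obtain x s where x: "x \<in> N" and s: "s \<in> S" and xs: "src x = src s"
      by (metis imageE)
    have "rnd x = 2*w" using edges_prev x u by (auto simp: N_def)
    moreover have "rnd s = 2*w" using s by (auto simp: S_def dag_round_def)
    moreover have "x \<in> Vs" "s \<in> Vs" using x s NVs SVs by auto
    ultimately have "x = s" using no_equiv xs by metis
    hence Eux: "E u x" and Exv: "E x v" using x s by (auto simp: N_def S_def)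
    have xD: "x \<in> DAG j" using dag_closed jn u Eux by blast
    have vD: "v \<in> DAG j" using dag_closed jn xD Exv by blast
    have "?R u x" using Eux xD u by simp
    moreover have "?R x v" using Exv xD vD by simp
    ultimately show ?thesis by (rule tranclp_into_tranclp2[OF _ tranclp.r_into_trancl])
  qed
  have step: "\<forall>u. u \<in> DAG j \<and> rnd u = 2*w+1+m \<longrightarrow> ?R\<^sup>+\<^sup>+ u v" for m
  proof (induction m)
    case 0 then show ?case using base by auto
  next
    case (Suc m)
    show ?case
    proof (intro allI impI)
      fix u assume u: "u \<in> DAG j \<and> rnd u = 2*w+1+Suc m"
      have uV: "u \<in> Vs" using u dag_sub jn by blast
      have "2 \<le> rnd u" using u w_pos by simp
      then have "card {x. E u x} \<noteq> 0" using edges_card uV by auto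
      then obtain x where Eux: "E u x" by (metis Collect_empty_eq card.empty)
      have xD: "x \<in> DAG j" using dag_closed jn u Eux by blast
      have "rnd x = 2*w+1+m" using edges_prev Eux u by auto
      then have "?R\<^sup>+\<^sup>+ x v" using Suc xD by blast
      then show "?R\<^sup>+\<^sup>+ u v" using Eux xD u
      proof -
        have "?R u x" using Eux xD u by simp
        then show ?thesis using \<open>?R\<^sup>+\<^sup>+ x v\<close> by (rule tranclp_into_tranclp2)
      qed
    qed
  qed
  have v': "v' \<in> DAG j" "rnd v' = 2*(w'-1)+1"
    using commit_j by (auto simp: commits_def dag_round_def wround_def)
  have "2*w+1 \<le> rnd v'" using v' w'_gt by simp
  then obtain m where m: "rnd v' = 2*w+1+m" using le_Suc_ex by blast
  have "?R\<^sup>+\<^sup>+ v' v" using step[of m] v'(1) m by blast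
  then show ?thesis unfolding dag_path_def .
qed

end
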